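(* Let $O$ be the closed disk of radius $R>0$ centered at the origin. Consider three pupils $P_1,P_2,P_3$, where $P_i$ is the closed disk of center $c_i\in\mathbb{R}^2$ and radius $\rho_i\ge0$ (radius $0$ meaning the single point $c_i$). Call the configuration valid if $O\subseteq\bigcup_{i,j=1}^3 D_{ij}$, where $D_{ij}$ is the closed disk of center $c_i-c_j$ and radius $\rho_i+\rho_j$. Then, among valid configurations, those in which one radius equals $R/2$ and the other two are $0$ (with arbitrary centers) minimize $\rho_1+\rho_2+\rho_3$; that is, every such configuration is valid, and every valid configuration satisfies $\rho_1+\rho_2+\rho_3\ge R/2$.
   Context: $D_{ij}=P_i\ominus P_j=\{a-b\mid a\in P_i,b\in P_j\}$ (Minkowski difference); $\bigcup_{i,j}D_{ij}$ is the auto-correlation support of the pupils. *)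

theory Defs
  imports "HOL-Analysis.Analysis"
begin

text \<open>Pupil i (i = 1,2,3) is the closed disk cball (c i) (rho i) in the plane.
  D_ij = P_i minus P_j (Minkowski difference) is the closed disk of centre c i - c j and
  radius rho i + rho j.\<close>

definition D :: "(nat \<Rightarrow> real^2) \<Rightarrow> (nat \<Rightarrow> real) \<Rightarrow> nat \<Rightarrow> nat \<Rightarrow> (real^2) set" where
  "D c rho i j = cball (c i - c j) (rho i + rho j)"

definition valid :: "real \<Rightarrow> (nat \<Rightarrow> real^2) \<Rightarrow> (nat \<Rightarrow> real) \<Rightarrow> bool" where
  "valid R c rho \<longleftrightarrow> cball 0 R \<subseteq> (\<Union>i\<in>{1..3}. \<Union>j\<in>{1..3}. D c rho i j)"

end

theory Submission imports Defs begin

lemma jordan: assumes "0 \<le> y" "y \<le> pi/2" shows "2 * y / pi \<le> sin y"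
proof -
  have "concave_on {0..pi/2} sin"
    by (rule f''_le0_imp_concave[where f'=cos and f''="\<lambda>x. - sin x"])
       (auto intro!: derivative_eq_intros sin_ge_zero)
  from concave_onD_Icc'[OF this, of y] assms
  show ?thesis by (simp add: field_simps)
qed

lemma cos_jordan: assumes "0 \<le> x" "x \<le> 1"
  shows "(cos (pi * x / 2))^2 \<le> 1 - x^2"
proof -
  have "x \<le> sin (pi * x / 2)" using jordan[of "pi*x/2"] assms by (simp add: field_simps)
  hence "x^2 \<le> (sin (pi * x / 2))^2" using assms by (simp add: power_mono)
  thus ?thesis using sin_cos_squared_add[of "pi*x/2"] by linarith
qed

lemma emeasure_Icc_max: "emeasure lborel {l..u::real} = ennreal (max 0 (u - l))"
  by (simp add: emeasure_lborel_Icc_eq max_def)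

lemma interval_cover:
  fixes l u :: "'k \<Rightarrow> real"
  assumes "finite K" "{a..b} \<subseteq> (\<Union>k\<in>K. {l k..u k})" "a \<le> b"
  shows "b - a \<le> (\<Sum>k\<in>K. max 0 (u k - l k))"
proof -
  have "ennreal (b - a) = emeasure lborel {a..b}" using assms by simp
  also have "\<dots> \<le> emeasure lborel (\<Union>k\<in>K. {l k..u k})"
    by (rule emeasure_mono[OF assms(2)]) (use assms(1) in \<open>auto intro!: sets.finite_UN\<close>)
  also have "\<dots> \<le> (\<Sum>k\<in>K. emeasure lborel {l k..u k})"
    by (rule emeasure_subadditive_finite) (use assms in auto)
  also have "\<dots> = ennreal (\<Sum>k\<in>K. max 0 (u k - l k))"
    by (simp add: emeasure_Icc_max)
  finally show ?thesis
    by (subst (asm) ennreal_le_iff) (auto intro: sum_nonneg)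
qed

lemma angle_case:
  assumes "0 \<le> \<theta>" "\<theta> \<le> 2*pi" "0 \<le> \<phi>" "\<phi> < 2*pi" "0 \<le> \<alpha>" "\<alpha> \<le> pi"
    and "cos \<alpha> \<le> cos (\<theta> - \<phi>)"
  shows "\<bar>\<theta> - \<phi>\<bar> \<le> \<alpha> \<or> \<bar>\<theta> - \<phi> - 2*pi\<bar> \<le> \<alpha> \<or> \<bar>\<theta> - \<phi> + 2*pi\<bar> \<le> \<alpha>"
proof -
  define x where "x = \<theta> - \<phi>"
  have c: "cos \<alpha> \<le> cos x" using assms x_def by simp
  have xr: "x \<le> 2*pi" "-2*pi < x" using assms x_def by auto
  consider "0 \<le> x" "x \<le> pi" | "-pi \<le> x" "x < 0" | "pi < x" | "x < -pi" by linarith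
  then show ?thesis
  proof cases
    case 1 then have "x \<le> \<alpha>" using c cos_mono_le_eq[of \<alpha> x] assms by blast
    then show ?thesis using 1 x_def by auto
  next
    case 2 then have "cos \<alpha> \<le> cos (-x)" using c by simp
    then have "-x \<le> \<alpha>" using 2 cos_mono_le_eq[of \<alpha> "-x"] assms by auto
    then show ?thesis using 2 x_def by auto
  next
    case 3 then have "cos \<alpha> \<le> cos (2*pi-x)" using c by simp
    then have "2*pi - x \<le> \<alpha>" using 3 xr cos_mono_le_eq[of \<alpha> "2*pi-x"] assms by auto
    then show ?thesis using 3 x_def assms by auto
  next
    case 4 then have "cos \<alpha> \<le> cos (x+2*pi)" using c by simp
    then have "x + 2*pi \<le> \<alpha>" using 4 xr cos_mono_le_eq[of \<alpha> "x+2*pi"] assms by auto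
    then show ?thesis using 4 x_def assms by auto
  qed
qed

definition pt :: "real \<Rightarrow> real \<Rightarrow> real^2" where
  "pt R \<theta> = (\<chi> i. if i = 1 then R * cos \<theta> else R * sin \<theta>)"

lemma pt1[simp]: "pt R \<theta> $ 1 = R * cos \<theta>" and pt2[simp]: "pt R \<theta> $ 2 = R * sin \<theta>"
  by (simp_all add: pt_def)

lemma dist2: "(dist x (y::real^2))^2 = (x$1-y$1)^2 + (x$2-y$2)^2"
  by (simp add: dist_norm norm_vec_def L2_set_def sum_2)

lemma norm2: "(norm (x::real^2))^2 = (x$1)^2 + (x$2)^2"
  by (simp add: norm_vec_def L2_set_def sum_2)

lemma cap_cover:
  assumes R: "0 < R" and t: "0 \<le> t" "t < R"
  shows "\<exists>l u :: nat \<Rightarrow> real. (\<Sum>n\<in>{0..2}. max 0 (u n - l n)) \<le> pi * t / R \<and>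
    (\<forall>\<theta>\<in>{0..2*pi}. dist (pt R \<theta>) q \<le> t \<longrightarrow>
       (\<exists>n\<in>{0..2}. l n \<le> \<theta> \<and> \<theta> \<le> u n))"
proof (cases "q = 0")
  case True
  have "\<not> dist (pt R \<theta>) q \<le> t" for \<theta>
  proof
    assume a: "dist (pt R \<theta>) q \<le> t"
    have e: "R^2*(cos \<theta>)^2 + R^2*(sin \<theta>)^2 = R^2"
      by (simp flip: distrib_left)
    have "(norm (pt R \<theta>))^2 = R^2"
      using norm2[of "pt R \<theta>"] e by (simp add: power_mult_distrib)
    hence "norm (pt R \<theta>) = R"
      by (rule power2_eq_imp_eq) (use R in auto)
    hence "dist (pt R \<theta>) q = R" using True by simp
    thus False using a t by simp
  qed
  moreover have "0 \<le> pi * t / R" using R t by simp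
  ultimately show ?thesis
    by (intro exI[of _ "\<lambda>_. 1"] exI[of _ "\<lambda>_. 0"]) simp
next
  case False
  define m where "m = norm q"
  have m: "m > 0" using False m_def by simp
  have m2: "m^2 = (q$1)^2 + (q$2)^2" using norm2[of q] m_def by simp
  have "(q$1/m)^2 + (q$2/m)^2 = ((q$1)^2 + (q$2)^2) / m^2"
    by (simp add: power_divide add_divide_distrib)
  also have "\<dots> = 1" using m2 m by (metis divide_self less_numeral_extra(3) zero_less_power)
  finally have "(q$1/m)^2 + (q$2/m)^2 = 1" .
  then obtain \<phi> where ph: "0 \<le> \<phi>" "\<phi> < 2*pi" "q$1/m = cos \<phi>" "q$2/m = sin \<phi>"
    by (rule sincos_total_2pi)
  have q1: "q$1 = m * cos \<phi>" and q2: "q$2 = m * sin \<phi>" using ph m by (auto simp: field_simps)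
  define \<alpha> where "\<alpha> = pi * (t/R) / 2"
  have al: "0 \<le> \<alpha>" "\<alpha> < pi/2" using R t by (auto simp: \<alpha>_def field_simps)
  have cj: "(cos \<alpha>)^2 \<le> 1 - (t/R)^2" unfolding \<alpha>_def using R t by (intro cos_jordan) auto
  define l where "l n = max 0 (\<phi> + 2*pi*(real n - 1) - \<alpha>)" for n
  define u where "u n = min (2*pi) (\<phi> + 2*pi*(real n - 1) + \<alpha>)" for n
  have "(\<Sum>n\<in>{0..2}. max 0 (u n - l n)) = max 0 (u 0 - l 0) + max 0 (u 1 - l 1) + max 0 (u 2 - l 2)"
    by (simp add: numeral_2_eq_2)
  also have "\<dots> \<le> 2 * \<alpha>"
  proof -
    have u0: "u 0 = \<phi> - 2*pi + \<alpha>" and l0: "l 0 = 0" using ph al pi_gt_zero by (auto simp: u_def l_def)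
    have u2: "u 2 = 2*pi" and l2: "l 2 = \<phi> + 2*pi - \<alpha>" using ph al pi_gt_zero by (auto simp: u_def l_def)
    have u1: "u 1 = min (2*pi) (\<phi> + \<alpha>)" and l1: "l 1 = max 0 (\<phi> - \<alpha>)" by (auto simp: u_def l_def)
    show ?thesis unfolding u0 l0 u1 l1 u2 l2 using ph al pi_gt_zero
      by (cases "\<phi> + \<alpha> \<le> 2*pi"; cases "\<alpha> \<le> \<phi>") (auto simp: max_def min_def)
  qed
  also have "\<dots> = pi * t / R" by (simp add: \<alpha>_def)
  finally have sum: "(\<Sum>n\<in>{0..2}. max 0 (u n - l n)) \<le> pi * t / R" .
  have cov: "\<exists>n\<in>{0..2}. l n \<le> \<theta> \<and> \<theta> \<le> u n"
    if th: "\<theta> \<in> {0..2*pi}" and d: "dist (pt R \<theta>) q \<le> t" for \<theta>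
  proof -
    have D2: "(dist (pt R \<theta>) q)^2 \<le> t^2"
      using d by (simp add: power_mono)
    have e1: "(cos \<theta>)^2 + (sin \<theta>)^2 = 1" and e2: "(cos \<phi>)^2 + (sin \<phi>)^2 = 1" by simp_all
    have "(dist (pt R \<theta>) q)^2 = R^2 + m^2 - 2*R*m*cos (\<theta> - \<phi>)"
      unfolding dist2 q1 q2 cos_diff pt1 pt2
      using e1 e2 by algebra
    with D2 have A: "R^2 + m^2 - 2*R*m*cos (\<theta> - \<phi>) \<le> t^2" by simp
    have B: "R^2 * (cos \<alpha>)^2 \<le> R^2 - t^2" using cj R
      by (simp add: field_simps power_divide)
    have C: "0 \<le> (R * cos \<alpha> - m)^2" by simp
    have "2*R*m*cos \<alpha> \<le> 2*R*m*cos (\<theta> - \<phi>)"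
    proof -
      have C': "2*R*m*cos \<alpha> \<le> R^2*(cos \<alpha>)^2 + m^2" using C by (simp add: power2_diff power_mult_distrib mult_ac)
      show ?thesis using A B C' by linarith
    qed
    hence "cos \<alpha> \<le> cos (\<theta> - \<phi>)" using R m by simp
    then have "\<bar>\<theta> - \<phi>\<bar> \<le> \<alpha> \<or> \<bar>\<theta> - \<phi> - 2*pi\<bar> \<le> \<alpha> \<or> \<bar>\<theta> - \<phi> + 2*pi\<bar> \<le> \<alpha>"
      using angle_case[of \<theta> \<phi> \<alpha>] th ph al by auto
    then show ?thesis
    proof (elim disjE)
      assume "\<bar>\<theta> - \<phi>\<bar> \<le> \<alpha>" thus ?thesis using th
        by (intro bexI[of _ 1]) (auto simp: l_def u_def)
    next
      assume "\<bar>\<theta> - \<phi> - 2*pi\<bar> \<le> \<alpha>" thus ?thesis using th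
        by (intro bexI[of _ 2]) (auto simp: l_def u_def)
    next
      assume "\<bar>\<theta> - \<phi> + 2*pi\<bar> \<le> \<alpha>" thus ?thesis using th
        by (intro bexI[of _ 0]) (auto simp: l_def u_def)
    qed
  qed
  show ?thesis using sum cov by blast
qed


lemma norm_pt: assumes "0 < R" shows "norm (pt R \<theta>) = R"
proof -
  have e: "R^2*(cos \<theta>)^2 + R^2*(sin \<theta>)^2 = R^2"
    by (simp flip: distrib_left)
  have "(norm (pt R \<theta>))^2 = R^2"
    using norm2[of "pt R \<theta>"] e by (simp add: power_mult_distrib)
  thus "norm (pt R \<theta>) = R"
    by (rule power2_eq_imp_eq) (use assms in auto)
qed

theorem lemma6:
  fixes R :: real and c :: "nat \<Rightarrow> real^2" and rho :: "nat \<Rightarrow> real"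
  assumes "R > 0"
    and "\<forall>i\<in>{1..3}. rho i \<ge> 0"
  shows "(\<forall>(c' :: nat \<Rightarrow> real^2) k. k \<in> {1..3} \<longrightarrow>
            valid R c' (\<lambda>i. if i = k then R / 2 else 0))
         \<and> (valid R c rho \<longrightarrow> rho 1 + rho 2 + rho 3 \<ge> R / 2)"
proof (intro conjI allI impI)
  fix c' :: "nat \<Rightarrow> real^2" and k :: nat
  assume k: "k \<in> {1..3}"
  show "valid R c' (\<lambda>i. if i = k then R / 2 else 0)"
    unfolding valid_def D_def
  proof
    fix x :: "real^2" assume "x \<in> cball 0 R"
    hence "x \<in> cball (c' k - c' k) ((if k = k then R / 2 else 0) + (if k = k then R / 2 else 0))"
      by simp
    thus "x \<in> (\<Union>i\<in>{1..3}. \<Union>j\<in>{1..3}. cball (c' i - c' j)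
                 ((if i = k then R / 2 else 0) + (if j = k then R / 2 else 0)))"
      using k by blast
  qed
next
  assume v: "valid R c rho"
  have r1: "rho 1 \<ge> 0" and r2: "rho 2 \<ge> 0" and r3: "rho 3 \<ge> 0" using assms(2) by auto
  show "rho 1 + rho 2 + rho 3 \<ge> R / 2"
  proof (rule ccontr)
    assume "\<not> ?thesis"
    hence s: "rho 1 + rho 2 + rho 3 < R / 2" by simp
    have small: "2 * rho i < R" if "i \<in> {1..3}" for i
    proof -
      have "i = 1 \<or> i = 2 \<or> i = 3" using that by auto
      thus ?thesis using s r1 r2 r3 by auto
    qed
    define P where "P = {(1::nat,2::nat),(1,3),(2,1),(2,3),(3,1),(3,2)}"
    have finP: "finite P" by (simp add: P_def)
    have Pin: "p \<in> P \<Longrightarrow> fst p \<in> {1..3} \<and> snd p \<in> {1..3}" for p by (auto simp: P_def)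
    define tt where "tt p = rho (fst p) + rho (snd p)" for p
    have tpos: "0 \<le> tt p" "tt p < R" if "p \<in> P" for p
      using that s r1 r2 r3 by (auto simp: P_def tt_def)
    have "\<forall>p\<in>P. \<exists>lu :: (nat \<Rightarrow> real) \<times> (nat \<Rightarrow> real).
       (\<Sum>n\<in>{0..2}. max 0 (snd lu n - fst lu n)) \<le> pi * tt p / R \<and>
       (\<forall>\<theta>\<in>{0..2*pi}. dist (pt R \<theta>) (c (fst p) - c (snd p)) \<le> tt p \<longrightarrow>
         (\<exists>n\<in>{0..2}. fst lu n \<le> \<theta> \<and> \<theta> \<le> snd lu n))"
    proof
      fix p assume "p \<in> P"
      from cap_cover[OF assms(1) tpos[OF this], of "c (fst p) - c (snd p)"]
      obtain l u :: "nat \<Rightarrow> real" where lu: "(\<Sum>n\<in>{0..2}. max 0 (u n - l n)) \<le> pi * tt p / R"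
        "\<forall>\<theta>\<in>{0..2*pi}. dist (pt R \<theta>) (c (fst p) - c (snd p)) \<le> tt p \<longrightarrow>
         (\<exists>n\<in>{0..2}. l n \<le> \<theta> \<and> \<theta> \<le> u n)" by blast
      show "\<exists>lu :: (nat \<Rightarrow> real) \<times> (nat \<Rightarrow> real).
       (\<Sum>n\<in>{0..2}. max 0 (snd lu n - fst lu n)) \<le> pi * tt p / R \<and>
       (\<forall>\<theta>\<in>{0..2*pi}. dist (pt R \<theta>) (c (fst p) - c (snd p)) \<le> tt p \<longrightarrow>
         (\<exists>n\<in>{0..2}. fst lu n \<le> \<theta> \<and> \<theta> \<le> snd lu n))"
        by (rule exI[of _ "(l,u)"]) (use lu in simp)
    qed
    from bchoice[OF this] obtain f :: "nat \<times> nat \<Rightarrow> (nat \<Rightarrow> real) \<times> (nat \<Rightarrow> real)" where f: "\<forall>p\<in>P.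
       (\<Sum>n\<in>{0..2}. max 0 (snd (f p) n - fst (f p) n)) \<le> pi * tt p / R \<and>
       (\<forall>\<theta>\<in>{0..2*pi}. dist (pt R \<theta>) (c (fst p) - c (snd p)) \<le> tt p \<longrightarrow>
         (\<exists>n\<in>{0..2}. fst (f p) n \<le> \<theta> \<and> \<theta> \<le> snd (f p) n))" by blast
    define K where "K = P \<times> {0..2::nat}"
    define lo where "lo k = fst (f (fst k)) (snd k)" for k
    define hi where "hi k = snd (f (fst k)) (snd k)" for k
    have "{0..2*pi} \<subseteq> (\<Union>k\<in>K. {lo k..hi k})"
    proof
      fix \<theta> assume th: "\<theta> \<in> {0..2*pi}"
      have "pt R \<theta> \<in> cball 0 R" using norm_pt[OF assms(1)] by simp
      then obtain i j where ij: "i \<in> {1..3}" "j \<in> {1..3}" "pt R \<theta> \<in> D c rho i j"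
        using v unfolding valid_def by blast
      have "i \<noteq> j"
      proof
        assume "i = j"
        hence "dist (pt R \<theta>) 0 \<le> 2 * rho i" using ij(3) by (simp add: D_def)
        thus False using norm_pt[OF assms(1), of \<theta>] small[OF ij(1)] by simp
      qed
      hence p: "(i,j) \<in> P" using ij(1,2) by (auto simp: P_def)
      have "dist (pt R \<theta>) (c i - c j) \<le> tt (i,j)" using ij(3) by (simp add: D_def tt_def dist_commute)
      moreover have "\<forall>\<theta>\<in>{0..2*pi}. dist (pt R \<theta>) (c i - c j) \<le> tt (i,j) \<longrightarrow>
         (\<exists>n\<in>{0..2}. fst (f (i,j)) n \<le> \<theta> \<and> \<theta> \<le> snd (f (i,j)) n)" using f p by fastforce
      ultimately obtain n where n: "n \<in> {0..2}" "fst (f (i,j)) n \<le> \<theta>" "\<theta> \<le> snd (f (i,j)) n"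
        using th by blast
      have "((i,j),n) \<in> K" using p n(1) by (simp add: K_def)
      moreover have "\<theta> \<in> {lo ((i,j),n)..hi ((i,j),n)}" using n by (simp add: lo_def hi_def)
      ultimately show "\<theta> \<in> (\<Union>k\<in>K. {lo k..hi k})" by blast
    qed
    from interval_cover[OF _ this] have "2*pi - 0 \<le> (\<Sum>k\<in>K. max 0 (hi k - lo k))"
      using finP by (simp add: K_def)
    also have "\<dots> = (\<Sum>p\<in>P. \<Sum>n\<in>{0..2}. max 0 (snd (f p) n - fst (f p) n))"
      unfolding K_def lo_def hi_def by (simp add: sum.cartesian_product case_prod_beta)
    also have "\<dots> \<le> (\<Sum>p\<in>P. pi * tt p / R)"
      using f by (intro sum_mono) blast
    also have "\<dots> = pi / R * (\<Sum>p\<in>P. tt p)"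
      by (simp add: sum_distrib_left)
    also have "pi / R * (\<Sum>p\<in>P. tt p) = pi / R * (4 * (rho 1 + rho 2 + rho 3))"
      by (simp add: P_def tt_def)
    finally have "2 * pi \<le> pi / R * (4 * (rho 1 + rho 2 + rho 3))" by simp
    hence "2 * pi * R \<le> pi * (4 * (rho 1 + rho 2 + rho 3))" using assms(1)
      by (simp add: field_simps)
    hence "R \<le> 2 * (rho 1 + rho 2 + rho 3)" by simp
    thus False using s by simp
  qed
qed

end
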